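(* For all $s\in[0,1]$ and $t\in\mathbb N^*$, $$P[s^{|B_t|}]\le Q\big[\hat q_{0,0}\circ\hat q_{1,0}\circ\cdots\circ\hat q_{t-1,0}(s)\big].$$
   Context: BRWRE on $\mathbb Z^d$, with $\mathbb N=\{0,1,\dots\}$ and $\mathbb N^*=\{1,2,\dots\}$. The environment $\mathbf q=(q_{t,x})_{(t,x)\in\mathbb N\times\mathbb Z^d}$ consists of probability measures on $\mathbb N$, i.i.d. under $Q$. Given $\mathbf q$, under $P^{\mathbf q}$ one particle starts at the origin at time $0$. A particle at $(t,x)$ jumps to a uniformly chosen nearest neighbour of $x$ and there dies, leaving $k$ children with probability $q_{t,x}(k)$; all independently. $B_t$ is the set of particles at time $t$, and $P=\int Q(d\mathbf q)P^{\mathbf q}$. For a probability measure $q$ on $\mathbb N$, $\hat q(s)=\sum_{k\ge0}s^kq(k)$ (with $0^0=1$). *)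

theory Defs
  imports "HOL-Probability.Probability"
begin

text \<open>Sites of the lattice Z^d are vectors int^'d with 'd a finite index type (d = CARD('d) >= 1).
  An environment assigns to each space-time point (t,x) an offspring law q_{t,x} :: nat pmf.\<close>

type_synonym 'd env = "nat \<times> (int ^ 'd) \<Rightarrow> nat pmf"

definition nbrs :: "int ^ 'd::finite \<Rightarrow> (int ^ 'd) set" where
  "nbrs x = {x + axis i 1 | i. True} \<union> {x - axis i 1 | i. True}"

text \<open>One time step of the quenched process: every particle of the current population
  (a list of positions) independently jumps to a uniform nearest neighbour y of its position x,
  dies there and is replaced by k particles at y, k distributed as q_{t,x}.\<close>

fun brw_step :: "'d::finite env \<Rightarrow> nat \<Rightarrow> (int ^ 'd) list \<Rightarrow> (int ^ 'd) list pmf" where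
  "brw_step q t [] = return_pmf []"
| "brw_step q t (x # xs) =
     bind_pmf (pmf_of_set (nbrs x)) (\<lambda>y.
     bind_pmf (q (t, x)) (\<lambda>k.
     bind_pmf (brw_step q t xs) (\<lambda>rest.
     return_pmf (replicate k y @ rest))))"

text \<open>Law under P^q of the population B_t (positions of the particles alive at time t),
  started from one particle at the origin at time 0.\<close>

fun brw :: "'d::finite env \<Rightarrow> nat \<Rightarrow> (int ^ 'd) list pmf" where
  "brw q 0 = return_pmf [0]"
| "brw q (Suc t) = bind_pmf (brw q t) (brw_step q t)"

definition brw_gf :: "'d::finite env \<Rightarrow> nat \<Rightarrow> real \<Rightarrow> real" where
  "brw_gf q t s = measure_pmf.expectation (brw q t) (\<lambda>xs. s ^ length xs)"

definition pgf :: "nat pmf \<Rightarrow> real \<Rightarrow> real" where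
  "pgf p s = (\<Sum>k. s ^ k * pmf p k)"

definition pgf_comp :: "'d::finite env \<Rightarrow> nat \<Rightarrow> real \<Rightarrow> real" where
  "pgf_comp q t s = foldr (\<lambda>i acc. pgf (q (i, 0)) acc) [0..<t] s"

end

theory Submission
  imports Defs
begin


lemma distr_merge_inf:
  fixes M :: "'i \<Rightarrow> 'a measure"
  assumes IJ: "I \<inter> J = {}" and M: "\<And>i. prob_space (M i)"
  shows "distr (PiM I M \<Otimes>\<^sub>M PiM J M) (PiM (I \<union> J) M) (merge I J) = PiM (I \<union> J) M"
proof (rule measure_eqI_PiM_infinite[symmetric, OF refl])
  interpret I: prob_space "PiM I M" using M by (intro prob_space_PiM) auto
  interpret J: prob_space "PiM J M" using M by (intro prob_space_PiM) auto
  interpret IJ: prob_space "PiM (I \<union> J) M" using M by (intro prob_space_PiM) auto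
  interpret P: pair_prob_space "PiM I M" "PiM J M" by unfold_locales
  show "finite_measure (PiM (I \<union> J) M)" by unfold_locales
  show "sets (distr (PiM I M \<Otimes>\<^sub>M PiM J M) (PiM (I \<union> J) M) (merge I J)) = sets (PiM (I \<union> J) M)" by simp
  fix K A assume K: "finite K" "K \<subseteq> I \<union> J" and A: "\<And>i. i \<in> K \<Longrightarrow> A i \<in> sets (M i)"
  let ?X = "prod_emb (I \<union> J) M K (Pi\<^sub>E K A)"
  have "PiM (I \<union> J) M ?X = (\<Prod>i\<in>K. M i (A i))"
    using M K A by (intro emeasure_PiM_emb) auto
  also have "\<dots> = (\<Prod>i\<in>K \<inter> I. M i (A i)) * (\<Prod>i\<in>K \<inter> J. M i (A i))"
  proof -
    have "K = (K \<inter> I) \<union> (K \<inter> J)" using K by auto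
    then have "(\<Prod>i\<in>K. M i (A i)) = (\<Prod>i\<in>(K \<inter> I) \<union> (K \<inter> J). M i (A i))" by simp
    also have "\<dots> = (\<Prod>i\<in>K \<inter> I. M i (A i)) * (\<Prod>i\<in>K \<inter> J. M i (A i))"
      using K IJ by (intro prod.union_disjoint) auto
    finally show ?thesis .
  qed
  also have "\<dots> = PiM I M (prod_emb I M (K \<inter> I) (Pi\<^sub>E (K \<inter> I) A)) * PiM J M (prod_emb J M (K \<inter> J) (Pi\<^sub>E (K \<inter> J) A))"
    using M K A by (subst (1 2) emeasure_PiM_emb) auto
  also have "\<dots> = (PiM I M \<Otimes>\<^sub>M PiM J M) (prod_emb I M (K \<inter> I) (Pi\<^sub>E (K \<inter> I) A) \<times> prod_emb J M (K \<inter> J) (Pi\<^sub>E (K \<inter> J) A))"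
    using K A by (intro J.emeasure_pair_measure_Times[symmetric] sets_PiM_I) (auto intro: finite_subset)
  also have "prod_emb I M (K \<inter> I) (Pi\<^sub>E (K \<inter> I) A) \<times> prod_emb J M (K \<inter> J) (Pi\<^sub>E (K \<inter> J) A)
     = merge I J -` ?X \<inter> space (PiM I M \<Otimes>\<^sub>M PiM J M)"
    using K IJ by (auto simp: prod_emb_def space_pair_measure space_PiM PiE_iff merge_def extensional_def; metis IntI disjoint_iff)+
  finally show "PiM (I \<union> J) M ?X = distr (PiM I M \<Otimes>\<^sub>M PiM J M) (PiM (I \<union> J) M) (merge I J) ?X"
    using K A by (subst emeasure_distr) (auto intro!: sets_PiM_I)
qed



lemma nbrs_finite[simp]: "finite (nbrs (x :: int ^ 'd::finite))"
proof -
  have "nbrs x = (\<lambda>i. x + axis i 1) ` UNIV \<union> (\<lambda>i. x - axis i 1) ` UNIV"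
    unfolding nbrs_def by auto
  then show ?thesis by simp
qed

lemma nbrs_ne[simp]: "nbrs (x :: int ^ 'd::finite) \<noteq> {}"
  unfolding nbrs_def by auto

lemma pgf_nn:
  assumes "0 \<le> u" "u \<le> 1"
  shows "(\<integral>\<^sup>+ k. ennreal (u ^ k) \<partial>measure_pmf p) = ennreal (pgf p u)"
    and "0 \<le> pgf p u" "pgf p u \<le> 1"
proof -
  have nn: "\<And>k. 0 \<le> u ^ k * pmf p k" using assms by simp
  have A: "(\<integral>\<^sup>+ k. ennreal (u ^ k) \<partial>measure_pmf p) = (\<Sum>k. ennreal (u ^ k * pmf p k))"
    by (simp add: nn_integral_measure_pmf nn_integral_count_space_nat ennreal_mult' mult.commute assms)
  have "(\<integral>\<^sup>+ k. ennreal (u ^ k) \<partial>measure_pmf p) \<le> (\<integral>\<^sup>+ k. 1 \<partial>measure_pmf p)"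
    using assms by (intro nn_integral_mono) (simp add: power_le_one)
  also have "\<dots> = 1" by simp
  finally have le1: "(\<Sum>k. ennreal (u ^ k * pmf p k)) \<le> 1" using A by simp
  then have sm: "summable (\<lambda>k. u ^ k * pmf p k)"
    using nn by (intro summable_suminf_not_top) (auto simp: top_unique)
  have eq: "(\<Sum>k. ennreal (u ^ k * pmf p k)) = ennreal (pgf p u)"
    unfolding pgf_def using nn sm by (rule suminf_ennreal2)
  show "(\<integral>\<^sup>+ k. ennreal (u ^ k) \<partial>measure_pmf p) = ennreal (pgf p u)" using A eq by simp
  show "0 \<le> pgf p u" unfolding pgf_def using nn sm by (simp add: suminf_nonneg)
  then show "pgf p u \<le> 1" using le1 eq by (simp add: ennreal_le_1)
qed

definition stepf :: "'d::finite env \<Rightarrow> nat \<Rightarrow> (int ^ 'd \<Rightarrow> real) \<Rightarrow> int ^ 'd \<Rightarrow> real" where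
  "stepf q t h x = (\<Sum>y\<in>nbrs x. pgf (q (t, x)) (h y)) / real (card (nbrs x))"

lemma stepf_bounds:
  assumes "\<And>y. 0 \<le> h y \<and> h y \<le> 1"
  shows "0 \<le> stepf q t h x \<and> stepf q t h x \<le> 1"
proof -
  have c: "card (nbrs x) > 0" using nbrs_finite nbrs_ne by (simp add: card_gt_0_iff)
  have "(\<Sum>y\<in>nbrs x. pgf (q (t, x)) (h y)) \<le> (\<Sum>y\<in>nbrs x. 1)"
    using assms pgf_nn(3) by (intro sum_mono) auto
  moreover have "0 \<le> (\<Sum>y\<in>nbrs x. pgf (q (t, x)) (h y))"
    using assms pgf_nn(2) by (intro sum_nonneg) auto
  ultimately show ?thesis using c unfolding stepf_def by (auto simp: divide_le_eq)
qed

lemma stepf_const: "0 \<le> s \<Longrightarrow> s \<le> 1 \<Longrightarrow> stepf q t (\<lambda>_. s) x = pgf (q (t, x)) s"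
  using nbrs_finite nbrs_ne unfolding stepf_def by (simp add: card_gt_0_iff)

lemma ennreal_prod_list: "(\<And>x. 0 \<le> f x) \<Longrightarrow> ennreal (prod_list (map f xs)) = prod_list (map (\<lambda>x. ennreal (f x)) xs)"
proof (induction xs)
  case (Cons a xs)
  have "0 \<le> prod_list (map f xs)" using Cons.prems by (intro prod_list_nonneg) auto
  then show ?case using Cons by (simp add: ennreal_mult)
qed simp

lemma brw_step_int:
  assumes h: "\<And>y. 0 \<le> h y \<and> h y \<le> 1"
  shows "(\<integral>\<^sup>+ ys. ennreal (prod_list (map h ys)) \<partial>measure_pmf (brw_step q t xs))
         = ennreal (prod_list (map (stepf q t h) xs))"
proof (induction xs)
  case Nil
  then show ?case by simp
next
  case (Cons x xs)
  have hn: "\<And>ys. 0 \<le> prod_list (map h ys)" using h by (intro prod_list_nonneg) auto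
  have sb: "\<And>x. 0 \<le> stepf q t h x \<and> stepf q t h x \<le> 1" using stepf_bounds h by blast
  have sn: "\<And>ys. 0 \<le> prod_list (map (stepf q t h) ys)" using sb by (intro prod_list_nonneg) auto
  have "(\<integral>\<^sup>+ ys. ennreal (prod_list (map h ys)) \<partial>measure_pmf (brw_step q t (x # xs)))
      = (\<integral>\<^sup>+ y. \<integral>\<^sup>+ k. \<integral>\<^sup>+ rest. ennreal (h y ^ k) * ennreal (prod_list (map h rest))
            \<partial>measure_pmf (brw_step q t xs) \<partial>measure_pmf (q (t, x)) \<partial>measure_pmf (pmf_of_set (nbrs x)))"
    using h by (simp add: ennreal_mult prod_list_nonneg hn)
  also have "\<dots> = (\<integral>\<^sup>+ y. \<integral>\<^sup>+ k. ennreal (h y ^ k) * ennreal (prod_list (map (stepf q t h) xs))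
            \<partial>measure_pmf (q (t, x)) \<partial>measure_pmf (pmf_of_set (nbrs x)))"
    by (simp add: nn_integral_cmult Cons.IH)
  also have "\<dots> = (\<integral>\<^sup>+ y. ennreal (pgf (q (t, x)) (h y)) * ennreal (prod_list (map (stepf q t h) xs))
            \<partial>measure_pmf (pmf_of_set (nbrs x)))"
    using h by (simp add: nn_integral_multc pgf_nn(1))
  also have "\<dots> = ennreal (stepf q t h x) * ennreal (prod_list (map (stepf q t h) xs))"
  proof -
    have "(\<integral>\<^sup>+ y. ennreal (pgf (q (t, x)) (h y)) \<partial>measure_pmf (pmf_of_set (nbrs x))) = ennreal (stepf q t h x)"
    proof -
      have c: "0 < card (nbrs x)" by (simp add: card_gt_0_iff)
      have "0 \<le> (\<Sum>y\<in>nbrs x. pgf (q (t, x)) (h y))" using h pgf_nn(2) by (intro sum_nonneg) auto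
      then show ?thesis using c h pgf_nn(2)
        by (simp add: nn_integral_pmf_of_set stepf_def ennreal_of_nat_eq_real_of_nat divide_ennreal sum_nonneg)
    qed
    then show ?thesis by (simp add: nn_integral_multc)
  qed
  also have "\<dots> = ennreal (prod_list (map (stepf q t h) (x # xs)))"
    using sb sn by (simp add: ennreal_mult)
  finally show ?case .
qed

fun bw :: "'d::finite env \<Rightarrow> nat \<Rightarrow> (int ^ 'd \<Rightarrow> real) \<Rightarrow> int ^ 'd \<Rightarrow> real" where
  "bw q 0 h = h"
| "bw q (Suc t) h = bw q t (stepf q t h)"

lemma bw_bounds: "(\<And>y. 0 \<le> h y \<and> h y \<le> 1) \<Longrightarrow> 0 \<le> bw q t h x \<and> bw q t h x \<le> 1"
  by (induction t arbitrary: h) (auto simp: stepf_bounds)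

lemma FE_bw:
  assumes "\<And>y. 0 \<le> h y \<and> h y \<le> 1"
  shows "(\<integral>\<^sup>+ xs. ennreal (prod_list (map h xs)) \<partial>measure_pmf (brw q t)) = ennreal (bw q t h 0)"
  using assms
proof (induction t arbitrary: h)
  case 0
  then show ?case by simp
next
  case (Suc t)
  have "(\<integral>\<^sup>+ xs. ennreal (prod_list (map h xs)) \<partial>measure_pmf (brw q (Suc t)))
     = (\<integral>\<^sup>+ xs. ennreal (prod_list (map (stepf q t h) xs)) \<partial>measure_pmf (brw q t))"
    using Suc.prems by (simp add: brw_step_int)
  also have "\<dots> = ennreal (bw q t (stepf q t h) 0)"
    by (rule Suc.IH, rule stepf_bounds, rule Suc.prems)
  finally show ?case by simp
qed

lemma brw_gf_FE:
  assumes "0 \<le> s" "s \<le> 1"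
  shows "ennreal (brw_gf q t s) = (\<integral>\<^sup>+ xs. ennreal (s ^ length xs) \<partial>measure_pmf (brw q t))"
proof -
  have "integrable (measure_pmf (brw q t)) (\<lambda>xs. s ^ length xs)"
    using assms by (intro measure_pmf.integrable_const_bound[where B=1]) (auto simp: power_le_one)
  then show ?thesis unfolding brw_gf_def
    using assms by (subst nn_integral_eq_integral) auto
qed

lemma brw_gf_bw:
  assumes "0 \<le> s" "s \<le> 1"
  shows "ennreal (brw_gf q t s) = ennreal (bw q t (\<lambda>_. s) 0)"
proof -
  have "ennreal (brw_gf q t s) = (\<integral>\<^sup>+ xs. ennreal (s ^ length xs) \<partial>measure_pmf (brw q t))"
    by (rule brw_gf_FE[OF assms])
  also have "\<dots> = (\<integral>\<^sup>+ xs. ennreal (prod_list (map (\<lambda>_. s) xs)) \<partial>measure_pmf (brw q t))"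
    by (simp add: map_replicate_const)
  also have "\<dots> = ennreal (bw q t (\<lambda>_. s) 0)"
    by (rule FE_bw) (use assms in auto)
  finally show ?thesis .
qed



lemma brw_step_cong: "(\<And>x. q (t, x) = q' (t, x)) \<Longrightarrow> brw_step q t xs = brw_step q' t xs"
  by (induction xs) auto

lemma brw_cong: "(\<And>i x. i < t \<Longrightarrow> q (i, x) = q' (i, x)) \<Longrightarrow> brw q t = brw q' t"
proof (induction t)
  case (Suc t)
  then have "brw q t = brw q' t" by auto
  moreover have "brw_step q t = brw_step q' t" using Suc.prems by (intro ext brw_step_cong) auto
  ultimately show ?case by simp
qed simp

lemma brw_gf_cong: "(\<And>i x. i < t \<Longrightarrow> q (i, x) = q' (i, x)) \<Longrightarrow> brw_gf q t s = brw_gf q' t s"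
  unfolding brw_gf_def using brw_cong by metis

lemma pgf_comp_Suc: "pgf_comp q (Suc t) s = pgf_comp q t (pgf (q (t, 0)) s)"
  unfolding pgf_comp_def by simp

lemma pgf_comp_cong: "(\<And>i. i < t \<Longrightarrow> q (i, 0) = q' (i, 0)) \<Longrightarrow> pgf_comp q t s = pgf_comp q' t s"
proof (induction t arbitrary: s)
  case (Suc t)
  then show ?case by (simp add: pgf_comp_Suc)
qed (simp add: pgf_comp_def)

lemma pgf_comp_bounds: "0 \<le> s \<Longrightarrow> s \<le> 1 \<Longrightarrow> 0 \<le> pgf_comp q t s \<and> pgf_comp q t s \<le> 1"
proof (induction t arbitrary: s)
  case 0
  then show ?case by (simp add: pgf_comp_def)
next
  case (Suc t)
  then show ?case by (simp add: pgf_comp_Suc pgf_nn)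
qed

locale envs =
  fixes \<mu> :: "nat pmf measure"
  assumes ps: "prob_space \<mu>"
    and sp: "space \<mu> = UNIV"
    and pm: "\<And>k. (\<lambda>p. pmf p k) \<in> borel_measurable \<mu>"
begin

lemma meas_pgf:
  assumes g: "g \<in> measurable N \<mu>" and u: "u \<in> borel_measurable N"
  shows "(\<lambda>q. pgf (g q) (u q)) \<in> borel_measurable N"
proof -
  have "\<And>k. (\<lambda>q. pmf (g q) k) \<in> borel_measurable N"
    using measurable_compose[OF g pm] by simp
  then show ?thesis unfolding pgf_def using u by measurable
qed

lemma meas_comp: "j \<in> I \<Longrightarrow> (\<lambda>q. q j) \<in> measurable (PiM I (\<lambda>_. \<mu>)) \<mu>"
  by (rule measurable_component_singleton)

lemma meas_stepf:
  assumes "\<And>y. (\<lambda>q. h q y) \<in> borel_measurable (PiM UNIV (\<lambda>_. \<mu>))"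
  shows "(\<lambda>q. stepf q t (h q) x) \<in> borel_measurable (PiM UNIV (\<lambda>_. \<mu>))"
  unfolding stepf_def
  by (intro borel_measurable_divide borel_measurable_const borel_measurable_sum meas_pgf[OF meas_comp] assms) auto

lemma meas_bw:
  assumes "\<And>y. (\<lambda>q. h q y) \<in> borel_measurable (PiM UNIV (\<lambda>_. \<mu>))"
  shows "(\<lambda>q. bw q t (h q) x) \<in> borel_measurable (PiM UNIV (\<lambda>_. \<mu>))"
  using assms
proof (induction t arbitrary: h)
  case 0
  then show ?case by simp
next
  case (Suc t)
  show ?case using Suc.IH[of "\<lambda>q. stepf q t (h q)"] meas_stepf[OF Suc.prems] by simp
qed

lemma meas_pgf_comp:
  assumes "u \<in> borel_measurable (PiM UNIV (\<lambda>_. \<mu>))"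
  shows "(\<lambda>q. pgf_comp q t (u q)) \<in> borel_measurable (PiM UNIV (\<lambda>_. \<mu>))"
  using assms
proof (induction t arbitrary: u)
  case 0
  then show ?case by (simp add: pgf_comp_def)
next
  case (Suc t)
  show ?case using Suc.IH[OF meas_pgf[OF meas_comp Suc.prems]] by (simp add: pgf_comp_Suc)
qed

end


context envs begin

lemma prod_int:
  fixes f :: "'i \<Rightarrow> nat pmf \<Rightarrow> ennreal"
  assumes J: "finite J" "J \<subseteq> I" and f: "\<And>j. j \<in> J \<Longrightarrow> f j \<in> borel_measurable \<mu>"
  shows "(\<integral>\<^sup>+ a. (\<Prod>j\<in>J. f j (a j)) \<partial>PiM I (\<lambda>_. \<mu>)) = (\<Prod>j\<in>J. integral\<^sup>N \<mu> (f j))"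
proof -
  interpret P: product_prob_space "\<lambda>_::'i. \<mu>" I
    using ps by (simp add: product_prob_space_def product_prob_space_axioms_def product_sigma_finite_def prob_space_imp_sigma_finite)
  have "(\<Prod>j\<in>J. integral\<^sup>N \<mu> (f j)) = (\<integral>\<^sup>+ x. (\<Prod>j\<in>J. f j (x j)) \<partial>PiM J (\<lambda>_. \<mu>))"
    using J f by (intro P.product_nn_integral_prod[symmetric]) auto
  also have "\<dots> = (\<integral>\<^sup>+ x. (\<Prod>j\<in>J. f j (x j)) \<partial>distr (PiM I (\<lambda>_. \<mu>)) (PiM J (\<lambda>_. \<mu>)) (\<lambda>x. restrict x J))"
    using P.distr_PiM_restrict_finite[OF J] by simp
  also have "\<dots> = (\<integral>\<^sup>+ a. (\<Prod>j\<in>J. f j (restrict a J j)) \<partial>PiM I (\<lambda>_. \<mu>))"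
    using J f by (intro nn_integral_distr measurable_restrict_subset) auto
  also have "\<dots> = (\<integral>\<^sup>+ a. (\<Prod>j\<in>J. f j (a j)) \<partial>PiM I (\<lambda>_. \<mu>))"
    by (intro nn_integral_cong prod.cong) auto
  finally show ?thesis by simp
qed

end

lemma swap_pmf:
  fixes G :: "'a \<Rightarrow> 'b::countable \<Rightarrow> ennreal"
  assumes N: "sigma_finite_measure N" and G: "\<And>xs. (\<lambda>a. G a xs) \<in> borel_measurable N"
  shows "(\<integral>\<^sup>+ a. \<integral>\<^sup>+ xs. G a xs \<partial>measure_pmf p \<partial>N) = (\<integral>\<^sup>+ xs. \<integral>\<^sup>+ a. G a xs \<partial>N \<partial>measure_pmf p)"
proof -
  interpret C: sigma_finite_measure "count_space (UNIV :: 'b set)"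
    by (rule sigma_finite_measure_count_space)
  interpret N: sigma_finite_measure N by fact
  interpret pair_sigma_finite "count_space (UNIV :: 'b set)" N by unfold_locales
  have m: "(\<lambda>(xs, a). ennreal (pmf p xs) * G a xs) \<in> borel_measurable (count_space UNIV \<Otimes>\<^sub>M N)"
  proof (rule measurable_pair_measure_countable1)
    fix xs :: 'b
    note G[measurable]
    show "(\<lambda>a. case (xs, a) of (xs, a) \<Rightarrow> ennreal (pmf p xs) * G a xs) \<in> borel_measurable N"
      by simp
  qed simp
  have "(\<integral>\<^sup>+ a. \<integral>\<^sup>+ xs. G a xs \<partial>measure_pmf p \<partial>N)
      = (\<integral>\<^sup>+ a. \<integral>\<^sup>+ xs. ennreal (pmf p xs) * G a xs \<partial>count_space UNIV \<partial>N)"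
    by (simp add: nn_integral_measure_pmf)
  also have "\<dots> = (\<integral>\<^sup>+ xs. \<integral>\<^sup>+ a. ennreal (pmf p xs) * G a xs \<partial>N \<partial>count_space UNIV)"
    using Fubini[OF m] by simp
  also have "\<dots> = (\<integral>\<^sup>+ xs. ennreal (pmf p xs) * \<integral>\<^sup>+ a. G a xs \<partial>N \<partial>count_space UNIV)"
    using G by (simp add: nn_integral_cmult)
  also have "\<dots> = (\<integral>\<^sup>+ xs. \<integral>\<^sup>+ a. G a xs \<partial>N \<partial>measure_pmf p)"
    by (simp add: nn_integral_measure_pmf)
  finally show ?thesis .
qed



lemma prod_list_count:
  fixes f :: "'a \<Rightarrow> 'b::comm_monoid_mult"
  shows "prod_list (map f xs) = (\<Prod>x\<in>set xs. f x ^ count_list xs x)"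
proof (induction xs)
  case (Cons a xs)
  have fin: "finite (set xs)" by simp
  show ?case
  proof (cases "a \<in> set xs")
    case True
    have "(\<Prod>x\<in>set (a # xs). f x ^ count_list (a # xs) x)
        = (\<Prod>x\<in>set xs. (if x = a then f x else 1) * f x ^ count_list xs x)"
      using True by (intro prod.cong) (auto simp: insert_absorb)
    also have "\<dots> = (\<Prod>x\<in>set xs. (if x = a then f x else 1)) * (\<Prod>x\<in>set xs. f x ^ count_list xs x)"
      by (rule prod.distrib)
    also have "(\<Prod>x\<in>set xs. (if x = a then f x else 1)) = f a"
      using True fin by (simp add: prod.delta)
    finally show ?thesis using Cons by simp
  next
    case False
    have "(\<Prod>x\<in>set (a # xs). f x ^ count_list (a # xs) x)
        = f a * (\<Prod>x\<in>set xs. f x ^ count_list (a # xs) x)"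
      using False fin by simp
    also have "(\<Prod>x\<in>set xs. f x ^ count_list (a # xs) x) = (\<Prod>x\<in>set xs. f x ^ count_list xs x)"
      using False by (intro prod.cong) auto
    finally show ?thesis using Cons by simp
  qed
qed simp

lemma length_count: "length xs = (\<Sum>x\<in>set xs. count_list xs x)"
  using sum_list_map_eq_sum_count2[of xs "set xs" "\<lambda>_. 1::nat"] by (simp add: sum_list_triv)

context envs begin

interpretation P: prob_space \<mu> by (rule ps)

definition EE :: "(nat pmf \<Rightarrow> real) \<Rightarrow> nat \<Rightarrow> real" where
  "EE \<phi> n = integral\<^sup>L \<mu> (\<lambda>p. \<phi> p ^ n)"

lemma EE_props:
  assumes m: "\<phi> \<in> borel_measurable \<mu>" and b: "\<And>p. 0 \<le> \<phi> p \<and> \<phi> p \<le> 1"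
  shows "integrable \<mu> (\<lambda>p. \<phi> p ^ n)" "0 \<le> EE \<phi> n" "EE \<phi> 0 = 1"
    "(\<integral>\<^sup>+ p. ennreal (\<phi> p ^ n) \<partial>\<mu>) = ennreal (EE \<phi> n)"
proof -
  show i: "integrable \<mu> (\<lambda>p. \<phi> p ^ n)"
    using b m by (intro P.integrable_const_bound[where B=1]) (auto simp: power_le_one)
  show "0 \<le> EE \<phi> n" unfolding EE_def using b by (intro integral_nonneg_AE) auto
  show "EE \<phi> 0 = 1" unfolding EE_def by (simp add: P.prob_space)
  show "(\<integral>\<^sup>+ p. ennreal (\<phi> p ^ n) \<partial>\<mu>) = ennreal (EE \<phi> n)"
    unfolding EE_def using i b by (intro nn_integral_eq_integral) auto
qed

lemma cheb:
  assumes m: "\<phi> \<in> borel_measurable \<mu>" and b: "\<And>p. 0 \<le> \<phi> p \<and> \<phi> p \<le> 1"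
  shows "EE \<phi> a * EE \<phi> b \<le> EE \<phi> (a + b)"
proof -
  note i = EE_props(1)[OF m b]
  define g where "g u v = (\<phi> u ^ a - \<phi> v ^ a) * (\<phi> u ^ b - \<phi> v ^ b)" for u v
  have gnn: "0 \<le> g u v" for u v
  proof -
    have "\<phi> u ^ a \<le> \<phi> v ^ a \<longleftrightarrow> \<phi> u \<le> \<phi> v \<or> a = 0"
      using b by (metis le_cases power_mono power_strict_mono not_le gr0I order.strict_implies_order order.refl power_0)
    moreover have "\<phi> u ^ b \<le> \<phi> v ^ b \<longleftrightarrow> \<phi> u \<le> \<phi> v \<or> b = 0"
      using b by (metis le_cases power_mono power_strict_mono not_le gr0I order.strict_implies_order order.refl power_0)
    ultimately show ?thesis unfolding g_def
      by (cases "a = 0"; cases "b = 0") (auto simp: mult_nonneg_nonneg mult_nonpos_nonpos zero_le_mult_iff)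
  qed
  have ge: "\<And>u v. g u v = (\<phi> u ^ (a + b) + \<phi> v ^ (a + b)) - (\<phi> u ^ a * \<phi> v ^ b + \<phi> u ^ b * \<phi> v ^ a)"
    unfolding g_def by (simp add: algebra_simps power_add)
  have inner: "integral\<^sup>L \<mu> (g u) = \<phi> u ^ (a + b) + EE \<phi> (a + b) - (\<phi> u ^ a * EE \<phi> b + \<phi> u ^ b * EE \<phi> a)" for u
    unfolding ge EE_def using i by (simp add: P.prob_space)
  have "0 \<le> integral\<^sup>L \<mu> (\<lambda>u. integral\<^sup>L \<mu> (g u))"
    using gnn by (intro integral_nonneg_AE AE_I2 integral_nonneg_AE) auto
  also have "integral\<^sup>L \<mu> (\<lambda>u. integral\<^sup>L \<mu> (g u)) = 2 * EE \<phi> (a + b) - 2 * (EE \<phi> a * EE \<phi> b)"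
    unfolding inner using i by (simp add: P.prob_space EE_def algebra_simps)
  finally show ?thesis by simp
qed

lemma cheb_prod:
  assumes m: "\<phi> \<in> borel_measurable \<mu>" and b: "\<And>p. 0 \<le> \<phi> p \<and> \<phi> p \<le> 1" and X: "finite X"
  shows "(\<Prod>x\<in>X. EE \<phi> (c x)) \<le> EE \<phi> (\<Sum>x\<in>X. c x)"
  using X
proof (induction X rule: finite_induct)
  case empty
  then show ?case using EE_props[OF m b] by simp
next
  case (insert x X)
  have "(\<Prod>x\<in>insert x X. EE \<phi> (c x)) = EE \<phi> (c x) * (\<Prod>x\<in>X. EE \<phi> (c x))"
    using insert by simp
  also have "\<dots> \<le> EE \<phi> (c x) * EE \<phi> (\<Sum>x\<in>X. c x)"
    using insert EE_props(2)[OF m b] by (intro mult_left_mono) auto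
  also have "\<dots> \<le> EE \<phi> (c x + (\<Sum>x\<in>X. c x))" by (rule cheb[OF m b])
  finally show ?case using insert by simp
qed

end


lemma meas_prod_list:
  fixes f :: "'x \<Rightarrow> 'a \<Rightarrow> ennreal"
  assumes "\<And>x. f x \<in> borel_measurable N"
  shows "(\<lambda>a. prod_list (map (\<lambda>x. f x a) xs)) \<in> borel_measurable N"
  using assms by (induction xs) auto

context envs begin

lemma K:
  fixes S :: "(nat \<times> (int ^ 'd::finite)) set"
  assumes m: "\<phi> \<in> borel_measurable \<mu>" and b: "\<And>p. 0 \<le> \<phi> p \<and> \<phi> p \<le> 1"
    and S: "\<And>x. (t, x) \<in> S"
  shows "(\<integral>\<^sup>+ a. ennreal (prod_list (map (\<lambda>x. \<phi> (a (t, x))) xs)) \<partial>PiM S (\<lambda>_. \<mu>))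
      \<le> (\<integral>\<^sup>+ a. ennreal (\<phi> (a (t, 0)) ^ length xs) \<partial>PiM S (\<lambda>_. \<mu>))"
proof -
  let ?c = "count_list xs"
  let ?J = "Pair t ` set xs"
  have inj: "inj_on (Pair t) (set xs)" by (auto simp: inj_on_def)
  have "(\<integral>\<^sup>+ a. ennreal (prod_list (map (\<lambda>x. \<phi> (a (t, x))) xs)) \<partial>PiM S (\<lambda>_. \<mu>))
      = (\<integral>\<^sup>+ a. (\<Prod>j\<in>?J. ennreal (\<phi> (a j) ^ ?c (snd j))) \<partial>PiM S (\<lambda>_. \<mu>))"
  proof (intro nn_integral_cong)
    fix a :: "'d env"
    have "ennreal (prod_list (map (\<lambda>x. \<phi> (a (t, x))) xs)) = ennreal (\<Prod>x\<in>set xs. \<phi> (a (t, x)) ^ ?c x)"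
      by (simp add: prod_list_count)
    also have "\<dots> = (\<Prod>x\<in>set xs. ennreal (\<phi> (a (t, x)) ^ ?c x))"
      using b by (intro prod_ennreal[symmetric]) auto
    also have "\<dots> = (\<Prod>j\<in>?J. ennreal (\<phi> (a j) ^ ?c (snd j)))"
      using inj by (simp add: prod.reindex)
    finally show "ennreal (prod_list (map (\<lambda>x. \<phi> (a (t, x))) xs)) = (\<Prod>j\<in>?J. ennreal (\<phi> (a j) ^ ?c (snd j)))" .
  qed
  also have "\<dots> = (\<Prod>j\<in>?J. \<integral>\<^sup>+ p. ennreal (\<phi> p ^ ?c (snd j)) \<partial>\<mu>)"
    using S m by (intro prod_int) auto
  also have "\<dots> = (\<Prod>j\<in>?J. ennreal (EE \<phi> (?c (snd j))))"
    using EE_props(4)[OF m b] by simp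
  also have "\<dots> = (\<Prod>x\<in>set xs. ennreal (EE \<phi> (?c x)))"
    using inj by (simp add: prod.reindex)
  also have "\<dots> = ennreal (\<Prod>x\<in>set xs. EE \<phi> (?c x))"
    using EE_props(2)[OF m b] by (intro prod_ennreal) auto
  also have "\<dots> \<le> ennreal (EE \<phi> (\<Sum>x\<in>set xs. ?c x))"
    by (intro ennreal_leI cheb_prod[OF m b]) auto
  also have "\<dots> = ennreal (EE \<phi> (length xs))" by (simp add: length_count[symmetric])
  also have "\<dots> = (\<integral>\<^sup>+ p. ennreal (\<phi> p ^ length xs) \<partial>\<mu>)"
    using EE_props(4)[OF m b] by simp
  also have "\<dots> = (\<Prod>j\<in>{(t, 0::int^'d)}. \<integral>\<^sup>+ p. ennreal (\<phi> p ^ length xs) \<partial>\<mu>)" by simp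
  also have "\<dots> = (\<integral>\<^sup>+ a. (\<Prod>j\<in>{(t, 0::int^'d)}. ennreal (\<phi> (a j) ^ length xs)) \<partial>PiM S (\<lambda>_. \<mu>))"
    using S m by (intro prod_int[symmetric]) auto
  also have "\<dots> = (\<integral>\<^sup>+ a. ennreal (\<phi> (a (t, 0)) ^ length xs) \<partial>PiM S (\<lambda>_. \<mu>))" by simp
  finally show ?thesis .
qed

end


context envs begin

lemma PiM_prob: "prob_space (PiM I (\<lambda>_. \<mu>))"
  using ps by (intro prob_space_PiM) auto

lemma PiM_sf: "sigma_finite_measure (PiM I (\<lambda>_. \<mu>))"
  using PiM_prob prob_space_imp_sigma_finite by blast

lemma split_int:
  fixes f :: "('i \<Rightarrow> nat pmf) \<Rightarrow> ennreal" and S R :: "'i set"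
  assumes SR: "S \<inter> R = {}" "S \<union> R = UNIV" and f: "f \<in> borel_measurable (PiM UNIV (\<lambda>_. \<mu>))"
  shows "(\<integral>\<^sup>+ q. f q \<partial>PiM UNIV (\<lambda>_. \<mu>)) = (\<integral>\<^sup>+ a. \<integral>\<^sup>+ b. f (merge S R (a, b)) \<partial>PiM R (\<lambda>_. \<mu>) \<partial>PiM S (\<lambda>_. \<mu>))"
    and "(\<integral>\<^sup>+ q. f q \<partial>PiM UNIV (\<lambda>_. \<mu>)) = (\<integral>\<^sup>+ b. \<integral>\<^sup>+ a. f (merge S R (a, b)) \<partial>PiM S (\<lambda>_. \<mu>) \<partial>PiM R (\<lambda>_. \<mu>))"
proof -
  interpret PS: sigma_finite_measure "PiM S (\<lambda>_. \<mu>)" by (rule PiM_sf)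
  interpret PR: sigma_finite_measure "PiM R (\<lambda>_. \<mu>)" by (rule PiM_sf)
  interpret PP: pair_sigma_finite "PiM S (\<lambda>_. \<mu>)" "PiM R (\<lambda>_. \<mu>)" by unfold_locales
  have D: "distr (PiM S (\<lambda>_. \<mu>) \<Otimes>\<^sub>M PiM R (\<lambda>_. \<mu>)) (PiM UNIV (\<lambda>_. \<mu>)) (merge S R) = PiM UNIV (\<lambda>_. \<mu>)"
    using distr_merge_inf[OF SR(1), of "\<lambda>_. \<mu>"] ps SR(2) by simp
  have mm: "merge S R \<in> measurable (PiM S (\<lambda>_. \<mu>) \<Otimes>\<^sub>M PiM R (\<lambda>_. \<mu>)) (PiM UNIV (\<lambda>_. \<mu>))"
    using measurable_merge[of S R "\<lambda>_. \<mu>"] SR(2) by simp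
  have fm: "(\<lambda>p. f (merge S R p)) \<in> borel_measurable (PiM S (\<lambda>_. \<mu>) \<Otimes>\<^sub>M PiM R (\<lambda>_. \<mu>))"
    using measurable_comp[OF mm f] by (simp add: comp_def)
  have E: "(\<integral>\<^sup>+ q. f q \<partial>PiM UNIV (\<lambda>_. \<mu>)) = (\<integral>\<^sup>+ p. f (merge S R p) \<partial>(PiM S (\<lambda>_. \<mu>) \<Otimes>\<^sub>M PiM R (\<lambda>_. \<mu>)))"
  proof -
    have "(\<integral>\<^sup>+ q. f q \<partial>PiM UNIV (\<lambda>_. \<mu>)) = (\<integral>\<^sup>+ q. f q \<partial>distr (PiM S (\<lambda>_. \<mu>) \<Otimes>\<^sub>M PiM R (\<lambda>_. \<mu>)) (PiM UNIV (\<lambda>_. \<mu>)) (merge S R))"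
      by (simp add: D)
    also have "\<dots> = (\<integral>\<^sup>+ p. f (merge S R p) \<partial>(PiM S (\<lambda>_. \<mu>) \<Otimes>\<^sub>M PiM R (\<lambda>_. \<mu>)))"
      using f D by (intro nn_integral_distr mm) simp
    finally show ?thesis .
  qed
  show "(\<integral>\<^sup>+ q. f q \<partial>PiM UNIV (\<lambda>_. \<mu>)) = (\<integral>\<^sup>+ a. \<integral>\<^sup>+ b. f (merge S R (a, b)) \<partial>PiM R (\<lambda>_. \<mu>) \<partial>PiM S (\<lambda>_. \<mu>))"
    unfolding E using PR.nn_integral_fst[OF fm] by simp
  show "(\<integral>\<^sup>+ q. f q \<partial>PiM UNIV (\<lambda>_. \<mu>)) = (\<integral>\<^sup>+ b. \<integral>\<^sup>+ a. f (merge S R (a, b)) \<partial>PiM S (\<lambda>_. \<mu>) \<partial>PiM R (\<lambda>_. \<mu>))"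
    unfolding E using PP.nn_integral_snd[OF fm] by simp
qed

lemma slice_int:
  fixes f :: "('i \<Rightarrow> nat pmf) \<Rightarrow> ennreal" and S R :: "'i set"
  assumes SR: "S \<inter> R = {}" "S \<union> R = UNIV" and f: "f \<in> borel_measurable (PiM UNIV (\<lambda>_. \<mu>))"
    and g: "\<And>a b. f (merge S R (a, b)) = g b"
  shows "(\<integral>\<^sup>+ q. f q \<partial>PiM UNIV (\<lambda>_. \<mu>)) = (\<integral>\<^sup>+ b. g b \<partial>PiM R (\<lambda>_. \<mu>))"
proof -
  interpret PS: prob_space "PiM S (\<lambda>_. \<mu>)" by (rule PiM_prob)
  show ?thesis
    unfolding split_int(1)[OF SR f] g by (simp add: PS.emeasure_space_1)
qed

end


lemma meas_prod_list_real:
  fixes f :: "'x \<Rightarrow> 'a \<Rightarrow> real"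
  assumes "\<And>x. f x \<in> borel_measurable N"
  shows "(\<lambda>a. prod_list (map (\<lambda>x. f x a) xs)) \<in> borel_measurable N"
  using assms by (induction xs) auto

context envs begin

lemma step:
  fixes t :: nat and s :: real
  assumes s: "0 \<le> s" "s \<le> 1"
    and IH: "\<And>v. 0 \<le> v \<Longrightarrow> v \<le> 1 \<Longrightarrow>
      (\<integral>\<^sup>+ q. ennreal (brw_gf (q::'d::finite env) t v) \<partial>PiM UNIV (\<lambda>_. \<mu>))
      \<le> (\<integral>\<^sup>+ q. ennreal (pgf_comp (q::'d env) t v) \<partial>PiM UNIV (\<lambda>_. \<mu>))"
  shows "(\<integral>\<^sup>+ q. ennreal (brw_gf (q::'d env) (Suc t) s) \<partial>PiM UNIV (\<lambda>_. \<mu>))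
      \<le> (\<integral>\<^sup>+ q. ennreal (pgf_comp (q::'d env) (Suc t) s) \<partial>PiM UNIV (\<lambda>_. \<mu>))"
proof -
  let ?Q = "PiM UNIV (\<lambda>_. \<mu>) :: 'd env measure"
  define S :: "(nat \<times> (int ^ 'd)) set" where "S = {j. fst j = t}"
  define R :: "(nat \<times> (int ^ 'd)) set" where "R = {j. fst j \<noteq> t}"
  let ?PS = "PiM S (\<lambda>_. \<mu>) :: 'd env measure"
  let ?PR = "PiM R (\<lambda>_. \<mu>) :: 'd env measure"
  have SR: "S \<inter> R = {}" "S \<union> R = UNIV" unfolding S_def R_def by auto
  have inS: "\<And>x. (t, x) \<in> S" unfolding S_def by simp
  have mgS: "\<And>a b x. merge S R (a, b) (t, x) = a (t, x)" by (simp add: merge_def S_def)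
  have mgR: "\<And>a b i x. i \<noteq> t \<Longrightarrow> merge S R (a, b) (i, x) = b (i, x)"
    by (simp add: merge_def S_def R_def)
  define \<phi> where "\<phi> p = pgf p s" for p
  have m\<phi>: "\<phi> \<in> borel_measurable \<mu>"
    unfolding \<phi>_def by (intro meas_pgf measurable_ident_sets) auto
  have b\<phi>: "\<And>p. 0 \<le> \<phi> p \<and> \<phi> p \<le> 1" unfolding \<phi>_def using pgf_nn(2,3) s by auto
  have mcomp: "\<And>j. (\<lambda>q. \<phi> (q j)) \<in> borel_measurable ?Q"
    by (rule measurable_compose[OF meas_comp m\<phi>]) simp
  have mcompS: "\<And>x. (\<lambda>q. \<phi> (q (t, x))) \<in> borel_measurable ?PS"
    by (rule measurable_compose[OF meas_comp[OF inS] m\<phi>])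
  have brwmg: "\<And>a b. brw (merge S R (a, b)) t = brw b t"
    by (intro brw_cong) (simp add: mgR)

  define L where "L q = ennreal (bw q t (\<lambda>x. \<phi> (q (t, x))) 0)" for q :: "'d env"
  have L1: "ennreal (brw_gf q (Suc t) s) = L q" for q
  proof -
    have "stepf q t (\<lambda>_. s) = (\<lambda>x. \<phi> (q (t, x)))"
      using s by (intro ext) (simp add: stepf_const \<phi>_def)
    then show ?thesis using brw_gf_bw[OF s, of q "Suc t"] by (simp add: L_def)
  qed
  have mL: "L \<in> borel_measurable ?Q"
    unfolding L_def using meas_bw[of "\<lambda>q x. \<phi> (q (t, x))" t 0] mcomp by measurable
  have Lmg: "L (merge S R (a, b)) = (\<integral>\<^sup>+ xs. ennreal (prod_list (map (\<lambda>x. \<phi> (a (t, x))) xs)) \<partial>measure_pmf (brw b t))" for a b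
    unfolding L_def using FE_bw[of "\<lambda>x. \<phi> (a (t, x))" "merge S R (a, b)" t] b\<phi>
    by (simp add: mgS brwmg)

  define G1 where "G1 q = ennreal (brw_gf q t (\<phi> (q (t, 0))))" for q :: "'d env"
  have G1bw: "G1 q = ennreal (bw q t (\<lambda>_. \<phi> (q (t, 0))) 0)" for q
    unfolding G1_def using b\<phi> by (intro brw_gf_bw) auto
  have mG1: "G1 \<in> borel_measurable ?Q"
    unfolding G1bw using meas_bw[of "\<lambda>q x. \<phi> (q (t, 0))" t 0] mcomp by measurable
  have G1mg: "G1 (merge S R (a, b)) = ennreal (brw_gf b t (\<phi> (a (t, 0))))" for a b
    unfolding G1_def by (simp add: mgS brw_gf_def brwmg)

  have inner: "(\<integral>\<^sup>+ a. L (merge S R (a, b)) \<partial>?PS) \<le> (\<integral>\<^sup>+ a. G1 (merge S R (a, b)) \<partial>?PS)" for b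
  proof -
    have "(\<integral>\<^sup>+ a. L (merge S R (a, b)) \<partial>?PS)
        = (\<integral>\<^sup>+ a. \<integral>\<^sup>+ xs. ennreal (prod_list (map (\<lambda>x. \<phi> (a (t, x))) xs)) \<partial>measure_pmf (brw b t) \<partial>?PS)"
      by (simp add: Lmg)
    also have "\<dots> = (\<integral>\<^sup>+ xs. \<integral>\<^sup>+ a. ennreal (prod_list (map (\<lambda>x. \<phi> (a (t, x))) xs)) \<partial>?PS \<partial>measure_pmf (brw b t))"
    proof (rule swap_pmf[OF PiM_sf])
      fix xs :: "(int ^ 'd) list"
      have "(\<lambda>a. prod_list (map (\<lambda>x. \<phi> (a (t, x))) xs)) \<in> borel_measurable ?PS"
        by (rule meas_prod_list_real[where f="\<lambda>x a. \<phi> (a (t, x))"]) (rule mcompS)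
      then show "(\<lambda>a. ennreal (prod_list (map (\<lambda>x. \<phi> (a (t, x))) xs))) \<in> borel_measurable ?PS"
        by measurable
    qed
    also have "\<dots> \<le> (\<integral>\<^sup>+ xs. \<integral>\<^sup>+ a. ennreal (\<phi> (a (t, 0)) ^ length xs) \<partial>?PS \<partial>measure_pmf (brw b t))"
      by (intro nn_integral_mono K[OF m\<phi> b\<phi> inS])
    also have "\<dots> = (\<integral>\<^sup>+ a. \<integral>\<^sup>+ xs. ennreal (\<phi> (a (t, 0)) ^ length xs) \<partial>measure_pmf (brw b t) \<partial>?PS)"
    proof (rule swap_pmf[OF PiM_sf, symmetric])
      fix xs :: "(int ^ 'd) list"
      show "(\<lambda>a. ennreal (\<phi> (a (t, 0)) ^ length xs)) \<in> borel_measurable ?PS"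
        using mcompS[of 0] by measurable
    qed
    also have "\<dots> = (\<integral>\<^sup>+ a. G1 (merge S R (a, b)) \<partial>?PS)"
      using b\<phi> by (simp add: G1mg brw_gf_FE)
    finally show ?thesis .
  qed

  have "(\<integral>\<^sup>+ q. ennreal (brw_gf q (Suc t) s) \<partial>?Q) = (\<integral>\<^sup>+ q. L q \<partial>?Q)"
    by (simp add: L1)
  also have "\<dots> = (\<integral>\<^sup>+ b. \<integral>\<^sup>+ a. L (merge S R (a, b)) \<partial>?PS \<partial>?PR)"
    by (rule split_int(2)[OF SR mL])
  also have "\<dots> \<le> (\<integral>\<^sup>+ b. \<integral>\<^sup>+ a. G1 (merge S R (a, b)) \<partial>?PS \<partial>?PR)"
    by (intro nn_integral_mono inner)
  also have "\<dots> = (\<integral>\<^sup>+ q. G1 q \<partial>?Q)"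
    by (rule split_int(2)[OF SR mG1, symmetric])
  also have "\<dots> = (\<integral>\<^sup>+ a. \<integral>\<^sup>+ b. G1 (merge S R (a, b)) \<partial>?PR \<partial>?PS)"
    by (rule split_int(1)[OF SR mG1])
  also have "\<dots> \<le> (\<integral>\<^sup>+ a. \<integral>\<^sup>+ b. ennreal (pgf_comp (merge S R (a, b)) t (\<phi> ((merge S R (a, b)) (t, 0)))) \<partial>?PR \<partial>?PS)"
  proof (rule nn_integral_mono)
    fix a :: "'d env"
    define v where "v = \<phi> (a (t, 0))"
    have v: "0 \<le> v" "v \<le> 1" unfolding v_def using b\<phi> by auto
    have m1: "(\<lambda>q. ennreal (brw_gf q t v)) \<in> borel_measurable ?Q"
    proof -
      have mb: "(\<lambda>q. ennreal (bw q t (\<lambda>_. v) 0)) \<in> borel_measurable ?Q"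
        using meas_bw[of "\<lambda>q x. v" t 0] by measurable
      have eq: "(\<lambda>q. ennreal (brw_gf q t v)) = (\<lambda>q. ennreal (bw q t (\<lambda>_. v) 0))"
        by (rule ext) (rule brw_gf_bw[OF v])
      show ?thesis unfolding eq by (rule mb)
    qed
    have m2: "(\<lambda>q. ennreal (pgf_comp q t v)) \<in> borel_measurable ?Q"
      using meas_pgf_comp[of "\<lambda>_. v" t] by measurable
    have "(\<integral>\<^sup>+ b. G1 (merge S R (a, b)) \<partial>?PR) = (\<integral>\<^sup>+ b. ennreal (brw_gf b t v) \<partial>?PR)"
      by (simp add: G1mg v_def)
    also have "\<dots> = (\<integral>\<^sup>+ q. ennreal (brw_gf q t v) \<partial>?Q)"
      by (rule slice_int[OF SR m1, symmetric]) (simp add: brw_gf_def brwmg)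
    also have "\<dots> \<le> (\<integral>\<^sup>+ q. ennreal (pgf_comp q t v) \<partial>?Q)" by (rule IH[OF v])
    also have "\<dots> = (\<integral>\<^sup>+ b. ennreal (pgf_comp b t v) \<partial>?PR)"
      by (rule slice_int[OF SR m2]) (intro arg_cong[where f=ennreal] pgf_comp_cong, simp add: mgR)
    also have "\<dots> = (\<integral>\<^sup>+ b. ennreal (pgf_comp (merge S R (a, b)) t (\<phi> ((merge S R (a, b)) (t, 0)))) \<partial>?PR)"
      by (intro nn_integral_cong arg_cong[where f=ennreal]) (simp add: mgS v_def; rule pgf_comp_cong; simp add: mgR)
    finally show "(\<integral>\<^sup>+ b. G1 (merge S R (a, b)) \<partial>?PR)
       \<le> (\<integral>\<^sup>+ b. ennreal (pgf_comp (merge S R (a, b)) t (\<phi> ((merge S R (a, b)) (t, 0)))) \<partial>?PR)" .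
  qed
  also have "\<dots> = (\<integral>\<^sup>+ q. ennreal (pgf_comp q t (\<phi> (q (t, 0)))) \<partial>?Q)"
  proof (rule split_int(1)[OF SR, symmetric])
    show "(\<lambda>q. ennreal (pgf_comp q t (\<phi> (q (t, 0))))) \<in> borel_measurable ?Q"
      using meas_pgf_comp[of "\<lambda>q. \<phi> (q (t, 0))" t] mcomp by measurable
  qed
  also have "\<dots> = (\<integral>\<^sup>+ q. ennreal (pgf_comp q (Suc t) s) \<partial>?Q)"
    by (simp add: pgf_comp_Suc \<phi>_def)
  finally show ?thesis .
qed

end

lemma base_eq: "brw_gf q 0 s = pgf_comp q 0 s"
  unfolding brw_gf_def pgf_comp_def by simp

theorem lemma4p6p4:
  fixes \<mu> :: "nat pmf measure" and s :: real and t :: nat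
  assumes "prob_space \<mu>"
    and "space \<mu> = UNIV"
    and "\<And>k. (\<lambda>p. pmf p k) \<in> borel_measurable \<mu>"
    and "0 \<le> s" and "s \<le> 1" and "1 \<le> t"
  shows "(\<integral>\<^sup>+ q. ennreal (brw_gf (q :: ('d::finite) env) t s) \<partial>(PiM UNIV (\<lambda>_. \<mu>)))
       \<le> (\<integral>\<^sup>+ q. ennreal (pgf_comp (q :: 'd env) t s) \<partial>(PiM UNIV (\<lambda>_. \<mu>)))"
proof -
  interpret envs \<mu> using assms(1-3) by (rule envs.intro)
  have "\<forall>v. 0 \<le> v \<longrightarrow> v \<le> 1 \<longrightarrow>
      (\<integral>\<^sup>+ q. ennreal (brw_gf (q :: 'd env) n v) \<partial>(PiM UNIV (\<lambda>_. \<mu>)))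
       \<le> (\<integral>\<^sup>+ q. ennreal (pgf_comp (q :: 'd env) n v) \<partial>(PiM UNIV (\<lambda>_. \<mu>)))" for n
  proof (induction n)
    case 0
    then show ?case by (simp add: base_eq)
  next
    case (Suc n)
    show ?case
    proof (intro allI impI)
      fix v :: real assume "0 \<le> v" "v \<le> 1"
      then show "(\<integral>\<^sup>+ q. ennreal (brw_gf (q :: 'd env) (Suc n) v) \<partial>(PiM UNIV (\<lambda>_. \<mu>)))
       \<le> (\<integral>\<^sup>+ q. ennreal (pgf_comp (q :: 'd env) (Suc n) v) \<partial>(PiM UNIV (\<lambda>_. \<mu>)))"
        using Suc.IH by (intro step) auto
    qed
  qed
  then show ?thesis using assms(4,5) by blast
qed

end
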